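(* Let $G$ be a graph, let $n\equiv 0 \pmod 4$, and let $v$ be a vertex of $G$ with $\sigma_v(G)\subset\mathbb{Z}$. Let $T_v=\{(j,v):j\in\mathbb{Z}_n\}\subseteq V(\uparrow^{n}G)$, and let $X$ be the graph obtained from $\uparrow^{n}G$ by adding a matching $M$ (a set of pairwise vertex-disjoint edges) each of whose edges joins two vertices of $T_v$. Then $X$ has Laplacian perfect state transfer at time $\frac{\pi}{2}$ between the two end vertices of every edge of $M$. Moreover, $X$ is periodic, with period $\frac{\pi}{2}$, at every vertex of $T_v$ not incident to an edge of $M$.
   Context: All graphs are simple, undirected and unweighted. $\sigma_v(G)$ is the Laplacian eigenvalue support of $v$: the set of distinct eigenvalues $\lambda$ of the Laplacian $L=D-A$ of $G$ with $E_\lambda\mathbf{e}_v\neq\mathbf{0}$, $E_\lambda$ the orthogonal projection onto the $\lambda$-eigenspace. The blow-up $\uparrow^{n}G$ has vertex set $\mathbb{Z}_n\times V(G)$, with $(l,u)\sim(m,w)$ iff $u\sim w$ in $G$. For a graph with Laplacian $L$ and $U(t)=\exp(itL)$: Laplacian perfect state transfer between $a,b$ at time $\tau$ means $U(\tau)\mathbf{e}_a=\gamma\mathbf{e}_b$ for some $\gamma\in\mathbb{C}$; the graph is periodic at $a$ at time $\tau>0$ if $|U(\tau)_{a,a}|=1$. *)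

theory Defs
  imports Complex_Main
begin

definition graph :: "'a set \<Rightarrow> ('a \<Rightarrow> 'a \<Rightarrow> bool) \<Rightarrow> bool" where
  "graph V E \<longleftrightarrow> finite V \<and> (\<forall>x y. E x y \<longrightarrow> x \<in> V \<and> y \<in> V)
     \<and> (\<forall>x y. E x y \<longrightarrow> E y x) \<and> (\<forall>x. \<not> E x x)"

definition degree :: "'a set \<Rightarrow> ('a \<Rightarrow> 'a \<Rightarrow> bool) \<Rightarrow> 'a \<Rightarrow> nat" where
  "degree V E x = card {y \<in> V. E x y}"

text \<open>Laplacian L = D - A, as a V x V real matrix (entries outside V are irrelevant).\<close>
definition laplacian :: "'a set \<Rightarrow> ('a \<Rightarrow> 'a \<Rightarrow> bool) \<Rightarrow> 'a \<Rightarrow> 'a \<Rightarrow> real" where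
  "laplacian V E x y = (if x = y then real (degree V E x) else 0) - (if E x y then 1 else 0)"

fun matpow :: "'a set \<Rightarrow> ('a \<Rightarrow> 'a \<Rightarrow> real) \<Rightarrow> nat \<Rightarrow> 'a \<Rightarrow> 'a \<Rightarrow> real" where
  "matpow V A 0 x y = (if x = y then 1 else 0)"
| "matpow V A (Suc k) x y = (\<Sum>z\<in>V. matpow V A k x z * A z y)"

definition transition :: "'a set \<Rightarrow> ('a \<Rightarrow> 'a \<Rightarrow> bool) \<Rightarrow> real \<Rightarrow> 'a \<Rightarrow> 'a \<Rightarrow> complex" where
  "transition V E t x y =
     (\<Sum>k. (\<i> * complex_of_real t) ^ k / of_nat (fact k) * complex_of_real (matpow V (laplacian V E) k x y))"

text \<open>Vectors in R^V are functions vanishing outside V; standard inner product.\<close>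
definition inner_on :: "'a set \<Rightarrow> ('a \<Rightarrow> real) \<Rightarrow> ('a \<Rightarrow> real) \<Rightarrow> real" where
  "inner_on V x y = (\<Sum>u\<in>V. x u * y u)"

definition eigenspace_lap :: "'a set \<Rightarrow> ('a \<Rightarrow> 'a \<Rightarrow> bool) \<Rightarrow> real \<Rightarrow> ('a \<Rightarrow> real) set" where
  "eigenspace_lap V E lam = {x. (\<forall>u. u \<notin> V \<longrightarrow> x u = 0)
      \<and> (\<forall>u\<in>V. (\<Sum>w\<in>V. laplacian V E u w * x w) = lam * x u)}"

definition is_lap_eigenvalue :: "'a set \<Rightarrow> ('a \<Rightarrow> 'a \<Rightarrow> bool) \<Rightarrow> real \<Rightarrow> bool" where
  "is_lap_eigenvalue V E lam \<longleftrightarrow> (\<exists>x\<in>eigenspace_lap V E lam. x \<noteq> (\<lambda>_. 0))"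

definition proj_on :: "'a set \<Rightarrow> ('a \<Rightarrow> real) set \<Rightarrow> ('a \<Rightarrow> real) \<Rightarrow> ('a \<Rightarrow> real)" where
  "proj_on V S x = (THE p. p \<in> S \<and> (\<forall>y\<in>S. inner_on V (\<lambda>u. x u - p u) y = 0))"

definition unit_vec :: "'a \<Rightarrow> 'a \<Rightarrow> real" where
  "unit_vec v = (\<lambda>u. if u = v then 1 else 0)"

definition eig_support :: "'a set \<Rightarrow> ('a \<Rightarrow> 'a \<Rightarrow> bool) \<Rightarrow> 'a \<Rightarrow> real set" where
  "eig_support V E v = {lam. is_lap_eigenvalue V E lam
      \<and> proj_on V (eigenspace_lap V E lam) (unit_vec v) \<noteq> (\<lambda>_. 0)}"

text \<open>Blow-up: vertex set Z_n x V with Z_n represented as {0..<n}.\<close>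
definition blowup_V :: "nat \<Rightarrow> 'a set \<Rightarrow> (nat \<times> 'a) set" where
  "blowup_V n V = {0..<n} \<times> V"

definition blowup_E :: "nat \<Rightarrow> ('a \<Rightarrow> 'a \<Rightarrow> bool) \<Rightarrow> nat \<times> 'a \<Rightarrow> nat \<times> 'a \<Rightarrow> bool" where
  "blowup_E n E x y \<longleftrightarrow> fst x < n \<and> fst y < n \<and> E (snd x) (snd y)"

definition lap_pst :: "'a set \<Rightarrow> ('a \<Rightarrow> 'a \<Rightarrow> bool) \<Rightarrow> 'a \<Rightarrow> 'a \<Rightarrow> real \<Rightarrow> bool" where
  "lap_pst V E a b tau \<longleftrightarrow>
     (\<exists>\<gamma>::complex. \<forall>x\<in>V. transition V E tau x a = \<gamma> * (if x = b then 1 else 0))"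

definition lap_periodic :: "'a set \<Rightarrow> ('a \<Rightarrow> 'a \<Rightarrow> bool) \<Rightarrow> 'a \<Rightarrow> real \<Rightarrow> bool" where
  "lap_periodic V E a tau \<longleftrightarrow> tau > 0 \<and> cmod (transition V E tau a a) = 1"

end

theory Submission
  imports Defs "HOL-Computational_Algebra.Computational_Algebra" "HOL-Library.Function_Algebras"
begin


definition Ac :: "'a set \<Rightarrow> ('a \<Rightarrow> 'a \<Rightarrow> real) \<Rightarrow> ('a \<Rightarrow> complex) \<Rightarrow> ('a \<Rightarrow> complex)" where
  "Ac V A f = (\<lambda>x. \<Sum>y\<in>V. complex_of_real (A x y) * f y)"

definition pop :: "'a set \<Rightarrow> ('a \<Rightarrow> 'a \<Rightarrow> real) \<Rightarrow> complex poly \<Rightarrow> ('a \<Rightarrow> complex) \<Rightarrow> ('a \<Rightarrow> complex)" where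
  "pop V A p f = (\<lambda>x. \<Sum>i\<le>degree p. coeff p i * (((Ac V A) ^^ i) f) x)"

lemma Ac_lin_sum:
  "Ac V A (\<lambda>x. \<Sum>i\<in>I. c i * g i x) x = (\<Sum>i\<in>I. c i * Ac V A (g i) x)"
proof -
  have l: "Ac V A (\<lambda>x. \<Sum>i\<in>I. c i * g i x) x = (\<Sum>y\<in>V. \<Sum>i\<in>I. c i * (complex_of_real (A x y) * g i y))"
    unfolding Ac_def by (simp add: sum_distrib_left mult_ac)
  have r: "(\<Sum>i\<in>I. c i * Ac V A (g i) x) = (\<Sum>i\<in>I. \<Sum>y\<in>V. c i * (complex_of_real (A x y) * g i y))"
    unfolding Ac_def by (simp add: sum_distrib_left)
  show ?thesis unfolding l r by (rule sum.swap)
qed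

lemma pop_ext:
  assumes "degree p \<le> N"
  shows "pop V A p f x = (\<Sum>i\<le>N. coeff p i * (((Ac V A) ^^ i) f) x)"
  unfolding pop_def
  by (rule sum.mono_neutral_left) (use assms in \<open>auto simp: coeff_eq_0 not_le\<close>)

lemma pop_add: "pop V A (p + q) f x = pop V A p f x + pop V A q f x"
proof -
  let ?N = "max (degree p) (degree q)"
  have "degree (p+q) \<le> ?N" by (simp add: degree_add_le)
  then show ?thesis
    by (simp add: pop_ext[of _ ?N] sum.distrib algebra_simps)
qed

lemma pop_smult: "pop V A (smult c p) f x = c * pop V A p f x"
  by (simp add: pop_ext[of _ "degree p"] sum_distrib_left mult.assoc)

lemma pop_zero[simp]: "pop V A 0 f x = 0"
  by (simp add: pop_def)

lemma pop_pCons: "pop V A (pCons a p) f x = a * f x + Ac V A (pop V A p f) x"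
proof -
  have "pop V A (pCons a p) f x = (\<Sum>i\<le>Suc (degree p). coeff (pCons a p) i * (((Ac V A) ^^ i) f) x)"
    by (rule pop_ext) (simp add: degree_pCons_le)
  also have "\<dots> = a * f x + (\<Sum>i\<le>degree p. coeff p i * (((Ac V A) ^^ Suc i) f) x)"
    by (subst sum.atMost_Suc_shift) simp
  also have "(\<Sum>i\<le>degree p. coeff p i * (((Ac V A) ^^ Suc i) f) x) = Ac V A (pop V A p f) x"
    unfolding pop_def by (subst Ac_lin_sum) simp
  finally show ?thesis .
qed

lemma pop_mult: "pop V A (p * q) f x = pop V A p (pop V A q f) x"
proof (induction p arbitrary: x)
  case 0
  then show ?case by simp
next
  case (pCons a p)
  have "pop V A (pCons a p * q) f x = a * pop V A q f x + pop V A (pCons 0 (p * q)) f x"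
    by (simp add: pop_add pop_smult)
  also have "pop V A (pCons 0 (p * q)) f x = Ac V A (pop V A (p*q) f) x"
    by (simp add: pop_pCons)
  also have "pop V A (p*q) f = pop V A p (pop V A q f)" using pCons.IH by auto
  finally show ?case by (simp add: pop_pCons)
qed

lemma pop_const: "pop V A [:c:] f x = c * f x"
  by (simp add: pop_def)

lemma pop_const_fun: "pop V A [:c:] f = (\<lambda>x. c * f x)"
  by (simp add: pop_def fun_eq_iff)

lemma pop_one: "pop V A 1 f x = f x"
  by (simp add: pop_def)

lemma pop_lin: "pop V A [:-m, 1:] f x = Ac V A f x - m * f x"
  by (simp add: pop_pCons pop_const_fun)

lemma pop_monom: "pop V A (monom c k) f x = c * (((Ac V A) ^^ k) f) x"
proof -
  have "pop V A (monom c k) f x = (\<Sum>i\<le>k. (if k = i then c * (((Ac V A) ^^ i) f) x else 0))"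
    unfolding pop_ext[of _ k, OF degree_monom_le] by (intro sum.cong) (auto simp: coeff_monom)
  then show ?thesis by simp
qed

lemma pop_sum: "finite I \<Longrightarrow> pop V A (\<Sum>i\<in>I. g i) f x = (\<Sum>i\<in>I. pop V A (g i) f x)"
  by (induction I rule: finite_induct) (auto simp: pop_add)

definition cinner :: "'a set \<Rightarrow> ('a \<Rightarrow> complex) \<Rightarrow> ('a \<Rightarrow> complex) \<Rightarrow> complex" where
  "cinner V f g = (\<Sum>x\<in>V. f x * cnj (g x))"

lemma cinner_sa:
  assumes sym: "\<And>x y. A x y = A y x"
  shows "cinner V (Ac V A f) g = cinner V f (Ac V A g)"
proof -
  have l: "cinner V (Ac V A f) g = (\<Sum>x\<in>V. \<Sum>y\<in>V. complex_of_real (A x y) * f y * cnj (g x))"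
    unfolding cinner_def Ac_def by (simp add: sum_distrib_right)
  have r: "cinner V f (Ac V A g) = (\<Sum>y\<in>V. \<Sum>x\<in>V. complex_of_real (A x y) * f y * cnj (g x))"
    unfolding cinner_def Ac_def by (simp add: sum_distrib_left sym mult_ac)
  show ?thesis unfolding l r by (rule sum.swap)
qed

lemma cinner_self_eq0:
  assumes "finite V" "cinner V f f = 0" "x \<in> V"
  shows "f x = 0"
proof -
  have eq0: "cinner V f f = (\<Sum>x\<in>V. complex_of_real ((cmod (f x))^2))"
    unfolding cinner_def
    by (intro sum.cong refl) (simp add: complex_mult_cnj cmod_power2 flip: of_real_power)
  have eq: "cinner V f f = complex_of_real (\<Sum>x\<in>V. (cmod (f x))^2)"
    unfolding eq0 of_real_sum ..
  have "(\<Sum>x\<in>V. (cmod (f x))^2) = 0" using assms(2) unfolding eq by (simp only: of_real_eq_0_iff)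
  then have "\<forall>x\<in>V. (cmod (f x))^2 = 0"
    using assms(1) by (subst (asm) sum_nonneg_eq_0_iff) auto
  then show ?thesis using assms(3) by auto
qed



lemma sum_apply_fun: "(\<Sum>i\<in>I. g i) x = (\<Sum>i\<in>I. g i x)"
  by (induction I rule: infinite_finite_induct) auto

lemma pop_minus: "pop V A (p - q) f x = pop V A p f x - pop V A q f x"
  using pop_add[of V A "p - q" q f x] by simp

lemma Ac_outside: "\<forall>x y. x \<notin> V \<longrightarrow> A x y = 0 \<Longrightarrow> x \<notin> V \<Longrightarrow> Ac V A f x = 0"
  by (simp add: Ac_def)

lemma pop_outside:
  assumes "\<forall>x y. x \<notin> V \<longrightarrow> A x y = 0" "x \<notin> V" "f x = 0"
  shows "pop V A p f x = 0"
  using assms by (induction p) (auto simp: pop_pCons Ac_outside)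

lemma annihilator:
  fixes e :: "'a \<Rightarrow> complex"
  assumes fin: "finite V" and out: "\<forall>x y. x \<notin> V \<longrightarrow> A x y = 0"
    and eout: "\<forall>x. x \<notin> V \<longrightarrow> e x = 0"
  shows "\<exists>p. p \<noteq> 0 \<and> (\<forall>x. pop V A p e x = 0)"
proof -
  define P where "P i = ((Ac V A)^^i) e" for i
  define N where "N = card V"
  have Pout: "P i x = 0" if "x \<notin> V" for i x
    using that eout out by (cases i) (auto simp: P_def Ac_outside)
  show ?thesis
  proof (cases "inj_on P {..N}")
    case False
    then obtain i j where ij: "i \<le> N" "j \<le> N" "i \<noteq> j" "P i = P j"
      unfolding inj_on_def by auto
    let ?p = "monom 1 i - monom (1::complex) j"
    have "coeff ?p i = 1" using ij by (simp add: coeff_monom)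
    then have "?p \<noteq> 0" by (metis coeff_0 zero_neq_one)
    moreover have "pop V A ?p e x = 0" for x
      using ij by (simp add: pop_minus pop_monom P_def)
    ultimately show ?thesis by blast
  next
    case True
    interpret vs: vector_space "\<lambda>(c::complex) (f::'a\<Rightarrow>complex). (\<lambda>x. c * f x)"
      by unfold_locales (auto simp: algebra_simps fun_eq_iff)
    define S where "S = P ` {..N}"
    define T where "T = (\<lambda>u. (\<lambda>x. if x = u then (1::complex) else 0)) ` V"
    have finS: "finite S" by (simp add: S_def)
    have cardS: "card S = Suc N" using True by (simp add: S_def card_image)
    have cardT: "card T \<le> N" unfolding T_def N_def by (rule card_image_le[OF fin])
    have span: "S \<subseteq> vs.span T"
    proof
      fix f assume "f \<in> S"
      then have fout: "\<forall>x. x\<notin>V \<longrightarrow> f x = 0" using Pout S_def by auto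
      have feq: "f = (\<Sum>u\<in>V. (\<lambda>x. f u * (if x = u then 1 else 0)))"
      proof
        fix x
        show "f x = (\<Sum>u\<in>V. (\<lambda>x. f u * (if x = u then 1 else 0))) x"
        proof -
          have "(\<Sum>u\<in>V. (\<lambda>x. f u * (if x = u then 1 else 0))) x = (\<Sum>u\<in>V. if x = u then f u else 0)"
            unfolding sum_apply_fun by (rule sum.cong) auto
          then show ?thesis using fout fin by (cases "x \<in> V") simp_all
        qed
      qed
      have "(\<Sum>u\<in>V. (\<lambda>x. f u * (if x = u then 1 else 0))) \<in> vs.span T"
        by (intro vs.span_sum vs.span_scale vs.span_base) (auto simp: T_def)
      then show "f \<in> vs.span T" using feq by simp
    qed
    have "vs.dependent S"
    proof (rule ccontr)
      assume "\<not> vs.dependent S"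
      then have "card S \<le> card T"
        using vs.independent_span_bound[OF _ _ span] fin T_def by auto
      then show False using cardS cardT by simp
    qed
    then obtain u where u: "\<exists>s\<in>S. u s \<noteq> 0" "(\<Sum>s\<in>S. (\<lambda>x. u s * s x)) = 0"
      using vs.dependent_finite[OF finS] by auto
    define p where "p = (\<Sum>i\<le>N. monom (u (P i)) i)"
    have cp: "coeff p i = (if i \<le> N then u (P i) else 0)" for i
      by (simp add: p_def coeff_sum coeff_monom)
    from u(1) obtain i where "i \<le> N" "u (P i) \<noteq> 0" unfolding S_def by auto
    then have "p \<noteq> 0" using cp[of i] by auto
    moreover have "pop V A p e x = 0" for x
    proof -
      have "pop V A p e x = (\<Sum>i\<le>N. u (P i) * P i x)"
        by (simp add: p_def pop_sum pop_monom P_def)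
      also have "\<dots> = (\<Sum>s\<in>S. u s * s x)"
        unfolding S_def by (subst sum.reindex[OF True]) simp
      also have "\<dots> = (\<Sum>s\<in>S. (\<lambda>x. u s * s x)) x" by (simp add: sum_apply_fun)
      also have "\<dots> = 0" using u(2) by simp
      finally show ?thesis .
    qed
    ultimately show ?thesis by blast
  qed
qed



lemma Ac_scale: "Ac V A (\<lambda>x. c * f x) x = c * Ac V A f x"
  unfolding Ac_def by (simp add: sum_distrib_left mult_ac)

lemma cinner_diff_left: "cinner V (\<lambda>x. f x - c * g x) h = cinner V f h - c * cinner V g h"
  unfolding cinner_def by (simp add: sum_subtractf sum_distrib_left algebra_simps)

lemma cinner_diff_right: "cinner V h (\<lambda>x. f x - c * g x) = cinner V h f - cnj c * cinner V h g"
  unfolding cinner_def by (simp add: sum_subtractf sum_distrib_left algebra_simps)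

lemma cinner_eig_left: "(\<And>x. Ac V A w x = \<mu> * w x) \<Longrightarrow> cinner V (Ac V A w) g = \<mu> * cinner V w g"
  unfolding cinner_def by (simp add: sum_distrib_left mult_ac)

lemma cinner_eig_right: "(\<And>x. Ac V A w x = \<mu> * w x) \<Longrightarrow> cinner V g (Ac V A w) = cnj \<mu> * cinner V g w"
  unfolding cinner_def by (simp add: sum_distrib_left mult_ac)

lemma eig_decomp_complex:
  fixes e :: "'a \<Rightarrow> complex"
  assumes fin: "finite V" and sym: "\<And>x y. A x y = A y x" and out: "\<forall>x y. x \<notin> V \<longrightarrow> A x y = 0"
    and eout: "\<forall>x. x \<notin> V \<longrightarrow> e x = 0" and enz: "x0 \<in> V" "e x0 \<noteq> 0"
  shows "\<exists>R u. finite R \<and> (\<forall>z\<in>R. Im z = 0) \<and> (\<forall>z\<in>R. \<forall>x. Ac V A (u z) x = z * u z x)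
     \<and> (\<forall>z\<in>R. \<forall>x. x \<notin> V \<longrightarrow> u z x = 0) \<and> (\<forall>x. e x = (\<Sum>z\<in>R. u z x))"
proof -
  define Pr where "Pr p \<longleftrightarrow> p \<noteq> 0 \<and> (\<forall>x. pop V A p e x = 0)" for p
  obtain p0 where "Pr p0" using annihilator[OF fin out eout] Pr_def by auto
  then obtain p where Pp: "Pr p" and pmin: "\<forall>q. Pr q \<longrightarrow> degree p \<le> degree q"
    using ex_has_least_nat[of Pr p0 degree] by blast
  have pnz: "p \<noteq> 0" and pe: "\<And>x. pop V A p e x = 0" using Pp Pr_def by auto
  have popout: "pop V A q e x = 0" if "x \<notin> V" for q x
    using pop_outside[OF out that] eout that by auto
  have nzc: "cinner V (pop V A q e) (pop V A q e) \<noteq> 0" if "q \<noteq> 0" "degree q < degree p" for q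
  proof
    assume c0: "cinner V (pop V A q e) (pop V A q e) = 0"
    have "pop V A q e x = 0" for x
      using cinner_self_eq0[OF fin c0] popout by (cases "x \<in> V") auto
    then have "Pr q" using that Pr_def by auto
    then show False using pmin that by auto
  qed
  have real: "cnj \<mu> = \<mu>" if "poly p \<mu> = 0" for \<mu>
  proof -
    have "[:-\<mu>, 1:] dvd p" using that by (simp add: poly_eq_0_iff_dvd)
    then obtain q where pq: "p = [:-\<mu>, 1:] * q" by (elim dvdE)
    have qnz: "q \<noteq> 0" using pnz pq by auto
    have "degree p = degree [:-\<mu>, 1:] + degree q" unfolding pq by (rule degree_mult_eq) (use qnz in auto)
    then have dq: "degree q < degree p" by simp
    define w where "w = pop V A q e"
    have ew: "Ac V A w x = \<mu> * w x" for x
      using pe[of x] unfolding pq pop_mult pop_lin w_def by simp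
    have c: "cinner V w w \<noteq> 0" using nzc[OF qnz dq] w_def by simp
    have "\<mu> * cinner V w w = cnj \<mu> * cinner V w w"
      using cinner_sa[of A V w w, OF sym] cinner_eig_left[of V A w \<mu>, OF ew] cinner_eig_right[of V A w \<mu>, OF ew]
      by simp
    then show ?thesis using c by simp
  qed
  have simple: "order \<mu> p \<le> 1" for \<mu>
  proof (rule ccontr)
    assume "\<not> order \<mu> p \<le> 1"
    then have "[:-\<mu>, 1:]^2 dvd p" using order_divides[of \<mu> 2 p] by simp
    then obtain h where ph: "p = [:-\<mu>, 1:]^2 * h" by (elim dvdE)
    have hnz: "h \<noteq> 0" using pnz ph by auto
    have "poly p \<mu> = 0" using ph by simp
    then have rm: "cnj \<mu> = \<mu>" by (rule real)
    define q where "q = [:-\<mu>, 1:] * h"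
    have qnz: "q \<noteq> 0" unfolding q_def by (rule no_zero_divisors) (use hnz in auto)
    have pq': "p = [:-\<mu>, 1:] * q" unfolding ph q_def by (simp only: power2_eq_square mult.assoc)
    have "degree p = degree [:-\<mu>, 1:] + degree q" unfolding pq' by (rule degree_mult_eq) (use qnz in auto)
    then have dq: "degree q < degree p" by simp
    define g where "g = pop V A h e"
    define w where "w = pop V A q e"
    have wg: "w = (\<lambda>x. Ac V A g x - \<mu> * g x)"
      unfolding w_def g_def q_def fun_eq_iff pop_mult pop_lin by simp
    have ew: "Ac V A w x - \<mu> * w x = 0" for x
      using pe[of x] unfolding pq' pop_mult pop_lin w_def by simp
    have "cinner V w w = cinner V (Ac V A g) w - \<mu> * cinner V g w"
      by (subst (1) wg) (rule cinner_diff_left)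
    also have "\<dots> = cinner V g (Ac V A w) - cnj \<mu> * cinner V g w"
      using cinner_sa[of A V g w, OF sym] rm by simp
    also have "\<dots> = cinner V g (\<lambda>x. Ac V A w x - \<mu> * w x)"
      by (rule cinner_diff_right[symmetric])
    also have "\<dots> = 0" using ew by (simp add: cinner_def)
    finally show False using nzc[OF qnz dq] w_def by simp
  qed
  define R where "R = {z. poly p z = 0}"
  have finR: "finite R" unfolding R_def using poly_roots_finite[OF pnz] .
  have "rsquarefree p" unfolding rsquarefree_def using pnz simple
    by (metis le_Suc_eq le_zero_eq One_nat_def)
  then have pdec: "smult (lead_coeff p) (\<Prod>z\<in>R. [:-z, 1:]) = p"
    unfolding R_def by (rule complex_poly_decompose_rsquarefree)
  define c where "c = lead_coeff p"
  have cnz: "c \<noteq> 0" using pnz c_def by simp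
  have prodz: "pop V A (\<Prod>z\<in>R. [:-z, 1:]) e x = 0" for x
  proof -
    have "pop V A p e x = c * pop V A (\<Prod>z\<in>R. [:-z, 1:]) e x"
      by (subst (1) pdec[symmetric]) (simp add: pop_smult c_def)
    then show ?thesis using pe[of x] cnz by simp
  qed
  have Rne: "R \<noteq> {}"
  proof
    assume "R = {}"
    then have "pop V A (\<Prod>z\<in>R. [:-z, 1:]) e x0 = e x0" by (simp add: pop_one)
    then show False using prodz[of x0] enz by simp
  qed
  define q where "q z = (\<Prod>y\<in>R-{z}. [:-y, 1:])" for z
  have prod_split: "(\<Prod>z\<in>R. [:-z, 1:]) = [:-z, 1:] * q z" if "z \<in> R" for z
    unfolding q_def using finR that by (simp add: prod.remove)
  have qz: "poly (q z) z \<noteq> 0" if "z \<in> R" for z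
    unfolding q_def poly_prod using finR by auto
  have qy: "poly (q z) y = 0" if "z \<in> R" "y \<in> R" "y \<noteq> z" for z y
    unfolding q_def poly_prod using finR that
    by (subst prod_zero_iff) (use finR that in \<open>auto intro!: bexI[of _ y]\<close>)
  have degq: "degree (q z) = card R - 1" if "z \<in> R" for z
  proof -
    have "degree (q z) = (\<Sum>y\<in>R-{z}. degree [:-y, 1:])"
      unfolding q_def by (rule degree_prod_sum_eq) auto
    also have "\<dots> = card (R - {z})" by simp
    finally show ?thesis using that finR by simp
  qed
  define Lg where "Lg = (\<Sum>z\<in>R. smult (1 / poly (q z) z) (q z))"
  have Lg1: "Lg = 1"
  proof (rule ccontr)
    assume "Lg \<noteq> 1"
    then have Dnz: "Lg - 1 \<noteq> 0" by simp
    have "poly (Lg - 1) y = 0" if "y \<in> R" for y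
    proof -
      have "poly Lg y = (\<Sum>z\<in>R. (1 / poly (q z) z) * poly (q z) y)"
        unfolding Lg_def by (simp add: poly_sum)
      also have "\<dots> = (1 / poly (q y) y) * poly (q y) y"
      proof -
        have "(\<Sum>z\<in>R-{y}. (1 / poly (q z) z) * poly (q z) y) = 0"
          by (rule sum.neutral) (use qy that in auto)
        then show ?thesis
          using sum.remove[OF finR that, of "\<lambda>z. (1 / poly (q z) z) * poly (q z) y"] by simp
      qed
      also have "\<dots> = 1" using qz[OF that] by simp
      finally show ?thesis by simp
    qed
    then have "R \<subseteq> {x. poly (Lg - 1) x = 0}" by auto
    then have "card R \<le> card {x. poly (Lg - 1) x = 0}"
      using poly_roots_finite[OF Dnz] by (rule card_mono[rotated])
    also have "\<dots> \<le> degree (Lg - 1)" by (rule card_poly_roots_bound[OF Dnz])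
    also have "\<dots> \<le> card R - 1"
      unfolding Lg_def
      by (intro degree_diff_le degree_sum_le finR) (auto simp: degq)
    finally have "card R \<le> card R - 1" .
    moreover have "card R > 0" using Rne finR by (simp add: card_gt_0_iff)
    ultimately show False by linarith
  qed
  define u where "u z = (\<lambda>x. (1 / poly (q z) z) * pop V A (q z) e x)" for z
  have ueig: "Ac V A (u z) x = z * u z x" if "z \<in> R" for z x
  proof -
    have "Ac V A (pop V A (q z) e) x - z * pop V A (q z) e x = 0"
      using prodz[of x] unfolding prod_split[OF that] pop_mult pop_lin .
    then show ?thesis unfolding u_def Ac_scale by (simp add: algebra_simps)
  qed
  have uout: "u z x = 0" if "x \<notin> V" for z x
    unfolding u_def using popout[OF that] by simp
  have esum: "e x = (\<Sum>z\<in>R. u z x)" for x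
  proof -
    have "e x = pop V A Lg e x" by (simp add: Lg1 pop_one)
    also have "\<dots> = (\<Sum>z\<in>R. u z x)"
      unfolding Lg_def u_def by (simp add: pop_sum[OF finR] pop_smult)
    finally show ?thesis .
  qed
  have "\<forall>z\<in>R. Im z = 0"
  proof
    fix z assume "z \<in> R"
    then have "cnj z = z" using real R_def by auto
    then have "Im (cnj z) = Im z" by simp
    then show "Im z = 0" by simp
  qed
  then show ?thesis
    apply (intro exI[of _ R] exI[of _ u] conjI)
    using finR ueig uout esum by auto
qed



lemma eig_decomp_real:
  fixes A :: "'a \<Rightarrow> 'a \<Rightarrow> real" and f :: "'a \<Rightarrow> real"
  assumes fin: "finite V" and sym: "\<And>x y. A x y = A y x" and out: "\<forall>x y. x \<notin> V \<longrightarrow> A x y = 0"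
    and fout: "\<forall>x. x \<notin> V \<longrightarrow> f x = 0"
  shows "\<exists>F r. finite F \<and> (\<forall>\<mu>\<in>F. (\<forall>x. x \<notin> V \<longrightarrow> r \<mu> x = 0)
            \<and> (\<forall>x\<in>V. (\<Sum>y\<in>V. A x y * r \<mu> y) = \<mu> * r \<mu> x)) \<and> (\<forall>x. f x = (\<Sum>\<mu>\<in>F. r \<mu> x))"
proof (cases "\<exists>x0\<in>V. f x0 \<noteq> 0")
  case False
  then have "\<forall>x. f x = 0" using fout by auto
  then show ?thesis by (intro exI[of _ "{}"] exI[of _ "\<lambda>_ _. 0"]) auto
next
  case True
  then obtain x0 where x0: "x0 \<in> V" "f x0 \<noteq> 0" by auto
  define e where "e = (\<lambda>x. complex_of_real (f x))"
  have eout: "\<forall>x. x \<notin> V \<longrightarrow> e x = 0" using fout e_def by simp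
  obtain R u where R: "finite R" "\<forall>z\<in>R. Im z = 0" "\<forall>z\<in>R. \<forall>x. Ac V A (u z) x = z * u z x"
     "\<forall>z\<in>R. \<forall>x. x \<notin> V \<longrightarrow> u z x = 0" "\<forall>x. e x = (\<Sum>z\<in>R. u z x)"
    using eig_decomp_complex[OF fin sym out eout x0(1)] x0(2) e_def by auto
  have zR: "complex_of_real (Re z) = z" if "z \<in> R" for z
    using R(2) that by (simp add: complex_eq_iff)
  have inj: "inj_on Re R"
    by (rule inj_onI) (metis zR)
  define F where "F = Re ` R"
  define r where "r = (\<lambda>\<mu> x. Re (u (complex_of_real \<mu>) x))"
  have rz: "r (Re z) = (\<lambda>x. Re (u z x))" if "z \<in> R" for z
    using zR[OF that] r_def by simp
  have "finite F" using R(1) F_def by simp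
  moreover have "\<forall>\<mu>\<in>F. (\<forall>x. x \<notin> V \<longrightarrow> r \<mu> x = 0)
            \<and> (\<forall>x\<in>V. (\<Sum>y\<in>V. A x y * r \<mu> y) = \<mu> * r \<mu> x)"
  proof
    fix \<mu> assume "\<mu> \<in> F"
    then obtain z where z: "z \<in> R" "\<mu> = Re z" using F_def by auto
    have "(\<Sum>y\<in>V. A x y * r \<mu> y) = \<mu> * r \<mu> x" for x
    proof -
      have "(\<Sum>y\<in>V. A x y * r \<mu> y) = Re (Ac V A (u z) x)"
        unfolding Ac_def z(2) rz[OF z(1)] by (simp add: Re_sum)
      also have "\<dots> = Re (z * u z x)" using R(3) z(1) by simp
      also have "\<dots> = \<mu> * r \<mu> x" using R(2) z rz[OF z(1)] by simp
      finally show ?thesis .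
    qed
    then show "(\<forall>x. x \<notin> V \<longrightarrow> r \<mu> x = 0) \<and> (\<forall>x\<in>V. (\<Sum>y\<in>V. A x y * r \<mu> y) = \<mu> * r \<mu> x)"
      using R(4) z rz[OF z(1)] by simp
  qed
  moreover have "f x = (\<Sum>\<mu>\<in>F. r \<mu> x)" for x
  proof -
    have "f x = Re (e x)" by (simp add: e_def)
    also have "\<dots> = (\<Sum>z\<in>R. Re (u z x))" using R(5) by (simp add: Re_sum)
    also have "\<dots> = (\<Sum>z\<in>R. r (Re z) x)" by (intro sum.cong refl) (simp add: rz)
    also have "\<dots> = (\<Sum>\<mu>\<in>F. r \<mu> x)" unfolding F_def by (rule sum.reindex[OF inj, symmetric, unfolded comp_def])
    finally show ?thesis .
  qed
  ultimately show ?thesis by blast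
qed

lemma lap_sym: "graph V E \<Longrightarrow> laplacian V E x y = laplacian V E y x"
  unfolding laplacian_def graph_def by auto

lemma lap_out: "graph V E \<Longrightarrow> x \<notin> V \<Longrightarrow> laplacian V E x y = 0"
  unfolding laplacian_def graph_def Defs.degree_def by auto

lemma eig_orth:
  assumes G: "graph V E" and a: "a \<in> eigenspace_lap V E \<nu>" and b: "b \<in> eigenspace_lap V E \<mu>"
    and ne: "\<nu> \<noteq> \<mu>"
  shows "inner_on V a b = 0"
proof -
  let ?L = "laplacian V E"
  have "\<nu> * inner_on V a b = (\<Sum>u\<in>V. (\<Sum>w\<in>V. ?L u w * a w) * b u)"
    using a unfolding inner_on_def eigenspace_lap_def by (simp add: sum_distrib_left mult_ac)
  also have "\<dots> = (\<Sum>u\<in>V. \<Sum>w\<in>V. ?L u w * a w * b u)" by (simp add: sum_distrib_right)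
  also have "\<dots> = (\<Sum>w\<in>V. \<Sum>u\<in>V. ?L u w * a w * b u)" by (rule sum.swap)
  also have "\<dots> = (\<Sum>w\<in>V. \<Sum>u\<in>V. a w * (?L w u * b u))"
    apply (intro sum.cong refl)
    subgoal for w u using lap_sym[OF G, of u w] by (simp add: mult_ac)
    done
  also have "\<dots> = (\<Sum>w\<in>V. a w * (\<Sum>u\<in>V. ?L w u * b u))"
    by (simp add: sum_distrib_left)
  also have "\<dots> = \<mu> * inner_on V a b"
    using b unfolding inner_on_def eigenspace_lap_def by (simp add: sum_distrib_left mult_ac)
  finally have "(\<nu> - \<mu>) * inner_on V a b = 0" by (simp add: algebra_simps)
  then show ?thesis using ne by simp
qed

lemma eigenspace_diff:
  "a \<in> eigenspace_lap V E \<mu> \<Longrightarrow> b \<in> eigenspace_lap V E \<mu> \<Longrightarrow> (\<lambda>u. a u - b u) \<in> eigenspace_lap V E \<mu>"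
  unfolding eigenspace_lap_def by (simp add: sum_subtractf algebra_simps right_diff_distrib)

lemma inner_self_eq0:
  assumes "finite V" "inner_on V d d = 0" "x \<in> V"
  shows "d x = 0"
proof -
  have "\<forall>x\<in>V. d x * d x = 0"
    using assms(1,2) unfolding inner_on_def by (subst (asm) sum_nonneg_eq_0_iff) auto
  then show ?thesis using assms(3) by auto
qed

lemma proj_eq:
  assumes G: "graph V E" and finF: "finite F"
    and rF: "\<forall>\<nu>\<in>F. r \<nu> \<in> eigenspace_lap V E \<nu>"
    and fsum: "\<forall>x. f x = (\<Sum>\<nu>\<in>F. r \<nu> x)" and mu: "\<mu> \<in> F"
  shows "proj_on V (eigenspace_lap V E \<mu>) f = r \<mu>"
  unfolding proj_on_def
proof (rule the_equality)
  have fin: "finite V" using G graph_def by auto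
  have diff: "(\<lambda>u. f u - r \<mu> u) = (\<lambda>u. \<Sum>\<nu>\<in>F-{\<mu>}. r \<nu> u)"
  proof (rule ext)
    fix x
    have "f x = r \<mu> x + (\<Sum>\<nu>\<in>F-{\<mu>}. r \<nu> x)"
      using fsum sum.remove[OF finF mu, of "\<lambda>\<nu>. r \<nu> x"] by simp
    then show "f x - r \<mu> x = (\<Sum>\<nu>\<in>F-{\<mu>}. r \<nu> x)" by simp
  qed
  show "r \<mu> \<in> eigenspace_lap V E \<mu> \<and> (\<forall>y\<in>eigenspace_lap V E \<mu>. inner_on V (\<lambda>u. f u - r \<mu> u) y = 0)"
  proof (intro conjI ballI)
    show "r \<mu> \<in> eigenspace_lap V E \<mu>" using rF mu by auto
  next
    fix y assume y: "y \<in> eigenspace_lap V E \<mu>"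
    have "inner_on V (\<lambda>u. f u - r \<mu> u) y = (\<Sum>\<nu>\<in>F-{\<mu>}. inner_on V (r \<nu>) y)"
      unfolding diff inner_on_def by (simp add: sum_distrib_right sum.swap[of _ V])
    also have "\<dots> = 0"
      by (rule sum.neutral) (use eig_orth[OF G _ y] rF in auto)
    finally show "inner_on V (\<lambda>u. f u - r \<mu> u) y = 0" .
  qed
  fix p assume p: "p \<in> eigenspace_lap V E \<mu> \<and> (\<forall>y\<in>eigenspace_lap V E \<mu>. inner_on V (\<lambda>u. f u - p u) y = 0)"
  have rmu: "r \<mu> \<in> eigenspace_lap V E \<mu>" using rF mu by auto
  define d where "d = (\<lambda>u. p u - r \<mu> u)"
  have dS: "d \<in> eigenspace_lap V E \<mu>" unfolding d_def using p rmu by (intro eigenspace_diff) auto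
  have i1: "inner_on V (\<lambda>u. f u - p u) d = 0" using p dS by auto
  have i2: "inner_on V (\<lambda>u. f u - r \<mu> u) d = 0"
  proof -
    have "inner_on V (\<lambda>u. f u - r \<mu> u) d = (\<Sum>\<nu>\<in>F-{\<mu>}. inner_on V (r \<nu>) d)"
      unfolding diff inner_on_def by (simp add: sum_distrib_right sum.swap[of _ V])
    also have "\<dots> = 0"
      by (rule sum.neutral) (use eig_orth[OF G _ dS] rF in auto)
    finally show ?thesis .
  qed
  have "inner_on V d d = inner_on V (\<lambda>u. f u - r \<mu> u) d - inner_on V (\<lambda>u. f u - p u) d"
    unfolding inner_on_def d_def by (simp add: sum_subtractf[symmetric] algebra_simps)
  then have dd: "inner_on V d d = 0" using i1 i2 by simp
  show "p = r \<mu>"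
  proof
    fix x show "p x = r \<mu> x"
    proof (cases "x \<in> V")
      case True then show ?thesis using inner_self_eq0[OF fin dd True] d_def by simp
    next
      case False then show ?thesis using p rmu unfolding eigenspace_lap_def by auto
    qed
  qed
qed

lemma unit_decomp:
  assumes G: "graph V E" and vV: "v \<in> V" and supp: "eig_support V E v \<subseteq> \<int>"
  shows "\<exists>F r. finite F \<and> (\<forall>\<mu>\<in>F. r \<mu> \<in> eigenspace_lap V E \<mu> \<and> (\<mu> \<in> \<int> \<or> r \<mu> = (\<lambda>_. 0)))
     \<and> (\<forall>x. unit_vec v x = (\<Sum>\<mu>\<in>F. r \<mu> x))"
proof -
  have fin: "finite V" using G graph_def by auto
  have out: "\<forall>x y. x \<notin> V \<longrightarrow> laplacian V E x y = 0" using lap_out[OF G] by auto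
  have uo: "\<forall>x. x \<notin> V \<longrightarrow> unit_vec v x = 0" using vV by (auto simp: unit_vec_def)
  obtain F r where F: "finite F" and rF: "\<forall>\<mu>\<in>F. (\<forall>x. x \<notin> V \<longrightarrow> r \<mu> x = 0)
            \<and> (\<forall>x\<in>V. (\<Sum>y\<in>V. laplacian V E x y * r \<mu> y) = \<mu> * r \<mu> x)"
     and fs: "\<forall>x. unit_vec v x = (\<Sum>\<mu>\<in>F. r \<mu> x)"
    using eig_decomp_real[OF fin lap_sym[OF G] out uo] by blast
  have rE: "\<forall>\<mu>\<in>F. r \<mu> \<in> eigenspace_lap V E \<mu>" using rF unfolding eigenspace_lap_def by auto
  have "\<mu> \<in> \<int> \<or> r \<mu> = (\<lambda>_. 0)" if mu: "\<mu> \<in> F" for \<mu>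
  proof (cases "r \<mu> = (\<lambda>_. 0)")
    case False
    have "proj_on V (eigenspace_lap V E \<mu>) (unit_vec v) = r \<mu>"
      by (rule proj_eq[OF G F rE fs mu])
    then have "\<mu> \<in> eig_support V E v"
      unfolding eig_support_def is_lap_eigenvalue_def using False rE mu by auto
    then show ?thesis using supp by auto
  qed simp
  then show ?thesis using F rE fs by blast
qed



lemma matpow_eig:
  assumes fin: "finite V" and x: "x \<in> V"
    and eig: "\<forall>z\<in>V. (\<Sum>y\<in>V. L z y * w y) = lam * w z"
  shows "(\<Sum>y\<in>V. matpow V L k x y * w y) = lam ^ k * w x"
  using x
proof (induction k arbitrary: x)
  case 0
  then show ?case using fin by (simp add: if_distrib[of "\<lambda>a. a * _"] cong: if_cong)
next
  case (Suc k)
  have "(\<Sum>y\<in>V. matpow V L (Suc k) x y * w y) = (\<Sum>y\<in>V. \<Sum>z\<in>V. matpow V L k x z * (L z y * w y))"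
    by (simp add: sum_distrib_right mult.assoc)
  also have "\<dots> = (\<Sum>z\<in>V. \<Sum>y\<in>V. matpow V L k x z * (L z y * w y))" by (rule sum.swap)
  also have "\<dots> = (\<Sum>z\<in>V. matpow V L k x z * (lam * w z))"
    using eig by (simp add: sum_distrib_left[symmetric])
  also have "\<dots> = lam * (\<Sum>z\<in>V. matpow V L k x z * w z)"
    by (simp add: sum_distrib_left mult_ac)
  also have "\<dots> = lam ^ Suc k * w x" using Suc by simp
  finally show ?case .
qed

lemma matpow_bound:
  assumes fin: "finite V" and out: "\<forall>z y. y \<notin> V \<longrightarrow> L z y = 0"
  shows "\<bar>matpow V L k x y\<bar> \<le> (1 + (\<Sum>y\<in>V. \<Sum>z\<in>V. \<bar>L z y\<bar>)) ^ k"
proof (induction k arbitrary: y)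
  case 0
  then show ?case by simp
next
  case (Suc k)
  define B where "B = 1 + (\<Sum>y\<in>V. \<Sum>z\<in>V. \<bar>L z y\<bar>)"
  have col: "(\<Sum>z\<in>V. \<bar>L z y\<bar>) \<le> B" for y
  proof (cases "y \<in> V")
    case True
    have "(\<Sum>z\<in>V. \<bar>L z y\<bar>) \<le> (\<Sum>y\<in>V. \<Sum>z\<in>V. \<bar>L z y\<bar>)"
      by (rule member_le_sum[OF True]) (auto intro: sum_nonneg simp: fin)
    then show ?thesis unfolding B_def by simp
  next
    case False
    have "(\<Sum>y\<in>V. \<Sum>z\<in>V. \<bar>L z y\<bar>) \<ge> 0" by (intro sum_nonneg) auto
    then show ?thesis using False out unfolding B_def by simp
  qed
  have "\<bar>matpow V L (Suc k) x y\<bar> \<le> (\<Sum>z\<in>V. \<bar>matpow V L k x z\<bar> * \<bar>L z y\<bar>)"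
    by (simp add: sum_abs[THEN order_trans] abs_mult)
  also have "\<dots> \<le> (\<Sum>z\<in>V. B ^ k * \<bar>L z y\<bar>)"
    using Suc.IH unfolding B_def by (intro sum_mono mult_right_mono) auto
  also have "\<dots> = B ^ k * (\<Sum>z\<in>V. \<bar>L z y\<bar>)" by (simp add: sum_distrib_left)
  also have "\<dots> \<le> B ^ k * B" using col[of y] unfolding B_def
    by (intro mult_left_mono) (auto intro!: zero_le_power add_nonneg_nonneg sum_nonneg)
  finally show ?case unfolding B_def by (simp add: mult.commute)
qed

lemma transition_summable:
  assumes G: "graph V E"
  shows "summable (\<lambda>k. (\<i> * complex_of_real t) ^ k / of_nat (fact k) * complex_of_real (matpow V (laplacian V E) k x y))"
proof -
  have fin: "finite V" using G graph_def by auto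
  have out: "\<forall>z y. y \<notin> V \<longrightarrow> laplacian V E z y = 0"
    using lap_out[OF G] lap_sym[OF G] by metis
  define B where "B = 1 + (\<Sum>y\<in>V. \<Sum>z\<in>V. \<bar>laplacian V E z y\<bar>)"
  have bd: "\<bar>matpow V (laplacian V E) k x y\<bar> \<le> B ^ k" for k
    unfolding B_def by (rule matpow_bound[OF fin out])
  show ?thesis
  proof (rule summable_comparison_test')
    show "summable (\<lambda>k. inverse (fact k) * (\<bar>t\<bar> * B) ^ k)" by (rule summable_exp)
    fix k :: nat
    have "norm ((\<i> * complex_of_real t) ^ k / of_nat (fact k) * complex_of_real (matpow V (laplacian V E) k x y))
        = \<bar>t\<bar> ^ k / fact k * \<bar>matpow V (laplacian V E) k x y\<bar>"
      by (simp add: norm_mult norm_divide norm_power)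
    also have "\<dots> \<le> \<bar>t\<bar> ^ k / fact k * B ^ k"
      by (intro mult_left_mono bd) auto
    also have "\<dots> = inverse (fact k) * (\<bar>t\<bar> * B) ^ k"
      by (simp add: power_mult_distrib field_simps)
    finally show "norm ((\<i> * complex_of_real t) ^ k / of_nat (fact k) * complex_of_real (matpow V (laplacian V E) k x y))
        \<le> inverse (fact k) * (\<bar>t\<bar> * B) ^ k" .
  qed
qed

lemma transition_eig:
  assumes G: "graph V E" and x: "x \<in> V"
    and eig: "\<forall>z\<in>V. (\<Sum>y\<in>V. laplacian V E z y * w y) = lam * w z"
  shows "(\<Sum>y\<in>V. transition V E t x y * complex_of_real (w y)) = exp (\<i> * complex_of_real (t * lam)) * complex_of_real (w x)"
proof -
  have fin: "finite V" using G graph_def by auto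
  define c where "c k = (\<i> * complex_of_real t) ^ k / of_nat (fact k)" for k
  have "(\<Sum>y\<in>V. transition V E t x y * complex_of_real (w y))
      = (\<Sum>y\<in>V. \<Sum>k. c k * complex_of_real (matpow V (laplacian V E) k x y) * complex_of_real (w y))"
    unfolding transition_def c_def
    by (intro sum.cong refl) (rule suminf_mult2, rule transition_summable[OF G])
  also have "\<dots> = (\<Sum>k. \<Sum>y\<in>V. c k * complex_of_real (matpow V (laplacian V E) k x y) * complex_of_real (w y))"
    by (rule suminf_sum[symmetric]) (unfold c_def, intro summable_mult2 transition_summable[OF G])
  also have "\<dots> = (\<Sum>k. (\<i> * complex_of_real (t * lam)) ^ k /\<^sub>R fact k * complex_of_real (w x))"
  proof (intro suminf_cong)
    fix k
    have "(\<Sum>y\<in>V. c k * complex_of_real (matpow V (laplacian V E) k x y) * complex_of_real (w y))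
        = c k * complex_of_real (\<Sum>y\<in>V. matpow V (laplacian V E) k x y * w y)"
      by (simp add: sum_distrib_left mult.assoc)
    also have "\<dots> = c k * complex_of_real (lam ^ k * w x)"
      using matpow_eig[OF fin x eig] by simp
    also have "\<dots> = (\<i> * complex_of_real (t * lam)) ^ k /\<^sub>R fact k * complex_of_real (w x)"
      unfolding c_def by (simp add: scaleR_conv_of_real power_mult_distrib field_simps)
    finally show "(\<Sum>y\<in>V. c k * complex_of_real (matpow V (laplacian V E) k x y) * complex_of_real (w y))
        = (\<i> * complex_of_real (t * lam)) ^ k /\<^sub>R fact k * complex_of_real (w x)" .
  qed
  also have "\<dots> = exp (\<i> * complex_of_real (t * lam)) * complex_of_real (w x)"
    by (rule sums_unique[symmetric], rule sums_mult2, rule exp_converges)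
  finally show ?thesis .
qed



lemma lap_action:
  assumes fin: "finite W" and x: "x \<in> W"
  shows "(\<Sum>y\<in>W. laplacian W R x y * w y) = (\<Sum>y\<in>{y\<in>W. R x y}. w x - w y)"
proof -
  have "(\<Sum>y\<in>W. laplacian W R x y * w y)
      = (\<Sum>y\<in>W. (if x = y then real (Defs.degree W R x) * w y else 0)) - (\<Sum>y\<in>W. if R x y then w y else 0)"
    unfolding laplacian_def by (simp add: sum_subtractf[symmetric] left_diff_distrib if_distrib[of "\<lambda>a. a * _"] cong: if_cong)
  also have "(\<Sum>y\<in>W. (if x = y then real (Defs.degree W R x) * w y else 0)) = real (Defs.degree W R x) * w x"
    using fin x by simp
  also have "(\<Sum>y\<in>W. if R x y then w y else 0) = (\<Sum>y\<in>{y\<in>W. R x y}. w y)"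
    using fin by (simp add: sum.inter_filter)
  also have "real (Defs.degree W R x) * w x = (\<Sum>y\<in>{y\<in>W. R x y}. w x)"
    unfolding Defs.degree_def by simp
  finally show ?thesis by (simp add: sum_subtractf)
qed

locale bsetup =
  fixes V :: "'a set" and E :: "'a \<Rightarrow> 'a \<Rightarrow> bool" and n :: nat and v :: 'a
    and M :: "(nat \<times> 'a) set set"
  assumes G: "graph V E"
    and vV: "v \<in> V"
    and M_edges: "\<forall>e\<in>M. \<exists>j k. j < n \<and> k < n \<and> j \<noteq> k \<and> e = {(j, v), (k, v)}"
    and M_matching: "\<forall>e\<in>M. \<forall>f\<in>M. e \<noteq> f \<longrightarrow> e \<inter> f = {}"
begin

abbreviation "VX \<equiv> blowup_V n V"
abbreviation "EXX \<equiv> (\<lambda>x y. blowup_E n E x y \<or> {x, y} \<in> M)"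

lemma finV: "finite V" using G unfolding graph_def by blast
lemma EV: "E x y \<Longrightarrow> x \<in> V \<and> y \<in> V" using G unfolding graph_def by blast
lemma Eirr: "\<not> E x x" using G unfolding graph_def by blast
lemma finVX: "finite VX" using finV by (simp add: blowup_V_def)

lemma Mpair: "{x, y} \<in> M \<Longrightarrow> \<exists>j k. x = (j, v) \<and> y = (k, v) \<and> j < n \<and> k < n \<and> j \<noteq> k"
proof -
  assume "{x, y} \<in> M"
  then obtain j k where jk: "j < n" "k < n" "j \<noteq> k" and e: "{x, y} = {(j, v), (k, v)}"
    using M_edges by meson
  from e have "(x = (j, v) \<and> y = (k, v)) \<or> (x = (k, v) \<and> y = (j, v))" by (simp only: doubleton_eq_iff)
  then show ?thesis
  proof
    assume "x = (j, v) \<and> y = (k, v)"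
    then show ?thesis using jk by (intro exI[of _ j] exI[of _ k]) simp
  next
    assume "x = (k, v) \<and> y = (j, v)"
    then show ?thesis using jk by (intro exI[of _ k] exI[of _ j]) simp
  qed
qed

lemma graphX: "graph VX EXX"
proof -
  have a: "x \<in> VX \<and> y \<in> VX" if "EXX x y" for x y
    using that
  proof
    assume "blowup_E n E x y"
    then have "fst x < n" "fst y < n" "E (snd x) (snd y)" unfolding blowup_E_def by auto
    moreover have "snd x \<in> V \<and> snd y \<in> V" using G calculation(3) unfolding graph_def by blast
    ultimately show ?thesis unfolding blowup_V_def by (cases x; cases y) auto
  next
    assume "{x, y} \<in> M"
    then obtain j k where "x = (j, v)" "y = (k, v)" "j < n" "k < n" using Mpair by blast
    then show ?thesis using vV unfolding blowup_V_def by simp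
  qed
  have Esym: "E u w \<Longrightarrow> E w u" for u w using G unfolding graph_def by blast
  have b: "EXX y x" if "EXX x y" for x y
    using that
  proof
    assume "blowup_E n E x y"
    then show ?thesis using Esym unfolding blowup_E_def by blast
  next
    assume "{x, y} \<in> M"
    then have "{y, x} \<in> M" by (simp add: insert_commute)
    then show ?thesis by blast
  qed
  have c: "\<not> EXX x x" for x
  proof
    assume "EXX x x"
    then show False
    proof
      assume "blowup_E n E x x"
      then show False using G unfolding blowup_E_def graph_def by blast
    next
      assume "{x, x} \<in> M"
      then show False using Mpair[of x x] by blast
    qed
  qed
  show ?thesis unfolding graph_def
  proof (intro conjI)
    show "finite VX" by (rule finVX)
    show "\<forall>x y. EXX x y \<longrightarrow> x \<in> VX \<and> y \<in> VX" by (intro allI impI) (rule a)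
    show "\<forall>x y. EXX x y \<longrightarrow> EXX y x" by (intro allI impI) (rule b)
    show "\<forall>x. \<not> EXX x x" by (intro allI) (rule c)
  qed
qed

lemma partner: "{a, b} \<in> M \<Longrightarrow> {a, y} \<in> M \<Longrightarrow> y = b"
proof -
  assume ab: "{a, b} \<in> M" and ay: "{a, y} \<in> M"
  have eq: "{a, b} = {a, y}"
  proof (rule ccontr)
    assume ne: "{a, b} \<noteq> {a, y}"
    have "{a, b} \<inter> {a, y} = {}" using M_matching[rule_format, OF ab ay ne] .
    moreover have "a \<in> {a, b} \<inter> {a, y}" by simp
    ultimately show False by (simp only: empty_iff)
  qed
  have ya: "a \<noteq> y" using Mpair[OF ay] by auto
  have "y \<in> {a, y}" by simp
  then have "y \<in> {a, b}" unfolding eq .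
  then show "y = b" using ya by simp
qed

definition NG :: "'a \<Rightarrow> 'a set" where "NG u = {w\<in>V. E u w}"

lemma X_action:
  assumes x: "x \<in> VX"
  shows "(\<Sum>y\<in>VX. laplacian VX EXX x y * w y)
     = (\<Sum>k<n. \<Sum>w'\<in>NG (snd x). w x - w (k, w')) + (\<Sum>y\<in>{y\<in>VX. {x, y} \<in> M}. w x - w y)"
proof -
  have "(\<Sum>y\<in>VX. laplacian VX EXX x y * w y) = (\<Sum>y\<in>{y\<in>VX. EXX x y}. w x - w y)"
    by (rule lap_action[OF finVX x])
  also have "{y\<in>VX. EXX x y} = {y\<in>VX. blowup_E n E x y} \<union> {y\<in>VX. {x, y} \<in> M}" by auto
  also have "(\<Sum>y\<in>{y\<in>VX. blowup_E n E x y} \<union> {y\<in>VX. {x, y} \<in> M}. w x - w y)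
     = (\<Sum>y\<in>{y\<in>VX. blowup_E n E x y}. w x - w y) + (\<Sum>y\<in>{y\<in>VX. {x, y} \<in> M}. w x - w y)"
  proof (rule sum.union_disjoint)
    show "finite {y\<in>VX. blowup_E n E x y}" using finVX by simp
    show "finite {y\<in>VX. {x, y} \<in> M}" using finVX by simp
    show "{y\<in>VX. blowup_E n E x y} \<inter> {y\<in>VX. {x, y} \<in> M} = {}"
    proof (rule ccontr)
      assume "\<not> ?thesis"
      then obtain y where "blowup_E n E x y" "{x, y} \<in> M" by auto
      then obtain j k where "x = (j, v)" "y = (k, v)" using Mpair[of x y] by blast
      then show False using \<open>blowup_E n E x y\<close> Eirr unfolding blowup_E_def by simp
    qed
  qed
  also have "{y\<in>VX. blowup_E n E x y} = {..<n} \<times> NG (snd x)"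
    using x EV unfolding blowup_V_def blowup_E_def NG_def by auto
  also have "(\<Sum>y\<in>{..<n} \<times> NG (snd x). w x - w y) = (\<Sum>k<n. \<Sum>w'\<in>NG (snd x). w x - w (k, w'))"
    unfolding sum.cartesian_product by (simp add: case_prod_beta')
  finally show ?thesis .
qed

lemma SB_R:
  assumes r: "r \<in> eigenspace_lap V E \<mu>" and u: "u \<in> V" and l: "l < n"
  defines "R \<equiv> (\<lambda>z. if fst z < n then r (snd z) else (0::real))"
  shows "(\<Sum>k<n. \<Sum>w'\<in>NG u. R (l, u) - R (k, w')) = real n * \<mu> * R (l, u)"
proof -
  have "(\<Sum>k<n. \<Sum>w'\<in>NG u. R (l, u) - R (k, w')) = (\<Sum>k<n. \<Sum>w'\<in>NG u. r u - r w')"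
    using l unfolding R_def by simp
  also have "\<dots> = real n * (\<Sum>w'\<in>NG u. r u - r w')" by simp
  also have "(\<Sum>w'\<in>NG u. r u - r w') = (\<Sum>w'\<in>V. laplacian V E u w' * r w')"
    unfolding NG_def by (rule lap_action[OF finV u, symmetric])
  also have "\<dots> = \<mu> * r u" using r u unfolding eigenspace_lap_def by auto
  finally show ?thesis using l unfolding R_def by simp
qed

lemma SM_R:
  fixes r :: "'a \<Rightarrow> real"
  assumes "{x, y} \<in> M"
  defines "R \<equiv> (\<lambda>z. if fst z < n then r (snd z) else (0::real))"
  shows "R x - R y = 0"
  using Mpair[OF assms(1)] unfolding R_def by auto

lemma eigX_R:
  assumes r: "r \<in> eigenspace_lap V E \<mu>"
  defines "R \<equiv> (\<lambda>z. if fst z < n then r (snd z) else (0::real))"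
  shows "\<forall>x\<in>VX. (\<Sum>y\<in>VX. laplacian VX EXX x y * R y) = (real n * \<mu>) * R x"
proof
  fix x assume x: "x \<in> VX"
  obtain l u where xlu: "x = (l, u)" "l < n" "u \<in> V" using x unfolding blowup_V_def by auto
  have "(\<Sum>y\<in>{y\<in>VX. {x, y} \<in> M}. R x - R y) = 0"
    by (rule sum.neutral) (auto simp: R_def dest: SM_R)
  then show "(\<Sum>y\<in>VX. laplacian VX EXX x y * R y) = (real n * \<mu>) * R x"
    unfolding X_action[OF x] using SB_R[OF r xlu(3) xlu(2)] xlu(1) R_def by simp
qed

lemma SB_Y:
  assumes Yout: "\<forall>z. snd z \<noteq> v \<longrightarrow> Y z = 0" and Ysum: "(\<Sum>k<n. Y (k, v)) = 0"
    and u: "u \<in> V"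
  shows "(\<Sum>k<n. \<Sum>w'\<in>NG u. Y (l, u) - Y (k, w')) = real n * real (Defs.degree V E v) * Y (l, u)"
proof -
  have "(\<Sum>k<n. \<Sum>w'\<in>NG u. Y (l, u) - Y (k, w'))
      = (\<Sum>k<n. \<Sum>w'\<in>NG u. Y (l, u)) - (\<Sum>k<n. \<Sum>w'\<in>NG u. Y (k, w'))"
    by (simp add: sum_subtractf)
  also have "(\<Sum>k<n. \<Sum>w'\<in>NG u. Y (k, w')) = (\<Sum>w'\<in>NG u. \<Sum>k<n. Y (k, w'))" by (rule sum.swap)
  also have "\<dots> = 0"
  proof (rule sum.neutral, rule ballI)
    fix w' assume "w' \<in> NG u"
    show "(\<Sum>k<n. Y (k, w')) = 0"
    proof (cases "w' = v")
      case True then show ?thesis using Ysum by simp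
    next
      case False then show ?thesis using Yout by simp
    qed
  qed
  also have "(\<Sum>k<n. \<Sum>w'\<in>NG u. Y (l, u)) = real n * real (Defs.degree V E u) * Y (l, u)"
    by (simp add: NG_def Defs.degree_def)
  finally show ?thesis
    using Yout by (cases "u = v") auto
qed

lemma eigX_Y0:
  assumes Yout: "\<forall>z. snd z \<noteq> v \<longrightarrow> Y z = 0" and Ysum: "(\<Sum>k<n. Y (k, v)) = 0"
    and Yconst: "\<forall>p q. {p, q} \<in> M \<longrightarrow> Y p = Y q"
  shows "\<forall>x\<in>VX. (\<Sum>y\<in>VX. laplacian VX EXX x y * Y y) = (real n * real (Defs.degree V E v)) * Y x"
proof
  fix x assume x: "x \<in> VX"
  obtain l u where xlu: "x = (l, u)" "l < n" "u \<in> V" using x unfolding blowup_V_def by auto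
  have "(\<Sum>y\<in>{y\<in>VX. {x, y} \<in> M}. Y x - Y y) = 0"
  proof (rule sum.neutral, rule ballI)
    fix y assume "y \<in> {y\<in>VX. {x, y} \<in> M}"
    then have "{x, y} \<in> M" by simp
    then have "Y x = Y y" using Yconst by blast
    then show "Y x - Y y = 0" by simp
  qed
  then show "(\<Sum>y\<in>VX. laplacian VX EXX x y * Y y) = (real n * real (Defs.degree V E v)) * Y x"
    unfolding X_action[OF x] using SB_Y[OF Yout Ysum xlu(3), of l] xlu(1) by simp
qed

lemma eigX_D:
  assumes ab: "{a, b} \<in> M"
  defines "D \<equiv> (\<lambda>z. (if z = a then 1 else 0) - (if z = b then 1 else (0::real)))"
  shows "\<forall>x\<in>VX. (\<Sum>y\<in>VX. laplacian VX EXX x y * D y) = (real n * real (Defs.degree V E v) + 2) * D x"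
proof
  fix x assume x: "x \<in> VX"
  obtain l u where xlu: "x = (l, u)" "l < n" "u \<in> V" using x unfolding blowup_V_def by auto
  obtain ja kb where jk: "a = (ja, v)" "b = (kb, v)" "ja < n" "kb < n" "ja \<noteq> kb" using Mpair[OF ab] by auto
  have ba: "{b, a} \<in> M" using ab by (simp add: insert_commute)
  have Dout: "\<forall>z. snd z \<noteq> v \<longrightarrow> D z = 0" using jk unfolding D_def by auto
  have Dsum: "(\<Sum>k<n. D (k, v)) = 0"
  proof -
    have "(\<Sum>k<n. D (k, v)) = (\<Sum>k<n. if k = ja then 1 else 0) - (\<Sum>k<n. if k = kb then 1 else (0::real))"
      unfolding D_def jk by (simp add: sum_subtractf)
    also have "\<dots> = 0" using jk by simp
    finally show ?thesis .
  qed
  have aVX: "a \<in> VX" and bVX: "b \<in> VX" using jk vV unfolding blowup_V_def by auto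
  have SM: "(\<Sum>y\<in>{y\<in>VX. {x, y} \<in> M}. D x - D y) = 2 * D x"
  proof (cases "x = a \<or> x = b")
    case True
    then show ?thesis
    proof
      assume xa: "x = a"
      have "{y\<in>VX. {x, y} \<in> M} = {b}"
      proof (rule set_eqI)
        fix y show "y \<in> {y\<in>VX. {x, y} \<in> M} \<longleftrightarrow> y \<in> {b}"
          using partner[OF ab, of y] xa ab bVX by blast
      qed
      then show ?thesis using xa jk unfolding D_def by auto
    next
      assume xb: "x = b"
      have "{y\<in>VX. {x, y} \<in> M} = {a}"
      proof (rule set_eqI)
        fix y show "y \<in> {y\<in>VX. {x, y} \<in> M} \<longleftrightarrow> y \<in> {a}"
          using partner[OF ba, of y] xb ba aVX by blast
      qed
      then show ?thesis using xb jk unfolding D_def by auto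
    qed
  next
    case False
    have "D y = 0" if "y \<in> {y\<in>VX. {x, y} \<in> M}" for y
    proof -
      have xy: "{x, y} \<in> M" using that by auto
      have "y \<noteq> a"
      proof
        assume "y = a"
        then have "{a, x} \<in> M" using xy by (simp add: insert_commute)
        then show False using partner[OF ab, of x] False by auto
      qed
      moreover have "y \<noteq> b"
      proof
        assume "y = b"
        then have "{b, x} \<in> M" using xy by (simp add: insert_commute)
        then show False using partner[OF ba, of x] False by auto
      qed
      ultimately show ?thesis unfolding D_def by simp
    qed
    moreover have "D x = 0" using False unfolding D_def by simp
    ultimately show ?thesis by simp
  qed
  show "(\<Sum>y\<in>VX. laplacian VX EXX x y * D y) = (real n * real (Defs.degree V E v) + 2) * D x"
    unfolding X_action[OF x] SM using SB_Y[OF Dout Dsum xlu(3), of l] xlu(1)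
    by (simp add: algebra_simps)
qed

end



lemma exp_int1:
  assumes "n mod 4 = 0" "z \<in> \<int>"
  shows "exp (\<i> * complex_of_real (pi / 2 * (real n * z))) = 1"
proof -
  obtain m where m: "n = 4 * m" using assms(1) by auto
  have th: "pi / 2 * (real n * z) = 2 * pi * (real m * z)" using m by simp
  have "cis (2 * pi * (real m * z)) = 1"
    by (rule cis_multiple_2pi) (use assms(2) in \<open>simp add: Ints_mult\<close>)
  then show ?thesis unfolding th cis_conv_exp .
qed

lemma exp_int2:
  assumes "n mod 4 = 0"
  shows "exp (\<i> * complex_of_real (pi / 2 * (real n * real d + 2))) = -1"
proof -
  obtain m where m: "n = 4 * m" using assms(1) by auto
  have th: "pi / 2 * (real n * real d + 2) = 2 * pi * (real m * real d) + pi" using m by (simp add: algebra_simps)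
  have "real m * real d \<in> \<int>" by (simp add: Ints_mult)
  then have "cis (2 * pi * (real m * real d)) = 1" by (rule cis_multiple_2pi)
  then have "cis (2 * pi * (real m * real d)) * cis pi = -1" by simp
  then have "cis (2 * pi * (real m * real d) + pi) = -1" unfolding cis_mult .
  then show ?thesis unfolding th cis_conv_exp .
qed

context bsetup
begin

lemma trans_col:
  assumes a: "a \<in> VX"
  shows "transition VX EXX t x a = (\<Sum>y\<in>VX. transition VX EXX t x y * complex_of_real (if y = a then 1 else 0))"
proof -
  have "(\<Sum>y\<in>VX. transition VX EXX t x y * complex_of_real (if y = a then 1 else 0))
      = (\<Sum>y\<in>VX. if y = a then transition VX EXX t x y else 0)"
    by (intro sum.cong refl) auto
  also have "\<dots> = transition VX EXX t x a" using finVX a by simp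
  finally show ?thesis by simp
qed

lemma R_facts:
  assumes n4: "n mod 4 = 0" and supp: "eig_support V E v \<subseteq> \<int>"
  obtains F r where "finite (F :: real set)"
    "\<And>\<mu> x. \<mu> \<in> F \<Longrightarrow> x \<in> VX \<Longrightarrow> (\<Sum>y\<in>VX. transition VX EXX (pi/2) x y * complex_of_real (if fst y < n then r \<mu> (snd y) else 0))
        = complex_of_real (if fst x < n then r \<mu> (snd x) else 0)"
    "\<And>y. y \<in> VX \<Longrightarrow> (\<Sum>\<mu>\<in>F. (if fst y < n then r \<mu> (snd y) else 0)) = (if snd y = v then 1 else 0)"
proof -
  obtain F r where F: "finite (F :: real set)"
    and rF: "\<forall>\<mu>\<in>F. r \<mu> \<in> eigenspace_lap V E \<mu> \<and> (\<mu> \<in> \<int> \<or> r \<mu> = (\<lambda>_. 0))"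
    and fs: "\<forall>x. unit_vec v x = (\<Sum>\<mu>\<in>F. r \<mu> x)"
    using unit_decomp[OF G vV supp] by blast
  show ?thesis
  proof (rule that[OF F])
    fix \<mu> x assume mu: "\<mu> \<in> F" and x: "x \<in> VX"
    let ?R = "\<lambda>z. if fst z < n then r \<mu> (snd z) else (0::real)"
    have "(\<Sum>y\<in>VX. transition VX EXX (pi/2) x y * complex_of_real (?R y))
        = exp (\<i> * complex_of_real (pi / 2 * (real n * \<mu>))) * complex_of_real (?R x)"
      by (rule transition_eig[OF graphX x eigX_R]) (use rF mu in auto)
    also have "\<dots> = complex_of_real (?R x)"
    proof (cases "\<mu> \<in> \<int>")
      case True then show ?thesis using exp_int1[OF n4 True] by simp
    next
      case False then have "r \<mu> = (\<lambda>_. 0)" using rF mu by auto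
      then show ?thesis by simp
    qed
    finally show "(\<Sum>y\<in>VX. transition VX EXX (pi/2) x y * complex_of_real (?R y)) = complex_of_real (?R x)" .
  next
    fix y assume y: "y \<in> VX"
    then have "fst y < n" unfolding blowup_V_def by auto
    then show "(\<Sum>\<mu>\<in>F. (if fst y < n then r \<mu> (snd y) else 0)) = (if snd y = v then 1 else 0)"
      using fs[rule_format, of "snd y"] by (simp add: unit_vec_def)
  qed
qed

lemma pst:
  assumes n4: "n mod 4 = 0" and supp: "eig_support V E v \<subseteq> \<int>" and ab: "{a, b} \<in> M"
  shows "lap_pst VX EXX a b (pi / 2)"
proof -
  obtain F r where F: "finite (F :: real set)"
    and Rt: "\<And>\<mu> x. \<mu> \<in> F \<Longrightarrow> x \<in> VX \<Longrightarrow> (\<Sum>y\<in>VX. transition VX EXX (pi/2) x y * complex_of_real (if fst y < n then r \<mu> (snd y) else 0))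
        = complex_of_real (if fst x < n then r \<mu> (snd x) else 0)"
    and Rs: "\<And>y. y \<in> VX \<Longrightarrow> (\<Sum>\<mu>\<in>F. (if fst y < n then r \<mu> (snd y) else 0)) = (if snd y = v then 1 else 0)"
    by (rule R_facts[OF n4 supp]) (rule that)
  obtain ja kb where jk: "a = (ja, v)" "b = (kb, v)" "ja < n" "kb < n" "ja \<noteq> kb" using Mpair[OF ab] by auto
  have ba: "{b, a} \<in> M" using ab by (simp add: insert_commute)
  have aVX: "a \<in> VX" and bVX: "b \<in> VX" using jk vV unfolding blowup_V_def by auto
  have npos: "real n > 0" using jk by simp
  define d where "d = Defs.degree V E v"
  define D where "D = (\<lambda>z. (if z = a then 1 else 0) - (if z = b then 1 else (0::real)))"
  define Yb where "Yb = (\<lambda>z. if snd z = v \<and> fst z < n then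
      ((if fst z = ja then 1 else 0) + (if fst z = kb then 1 else 0)) / 2 - 1 / real n else (0::real))"
  define R where "R \<mu> = (\<lambda>z. if fst z < n then r \<mu> (snd z) else (0::real))" for \<mu>
  have Yout: "\<forall>z. snd z \<noteq> v \<longrightarrow> Yb z = 0" unfolding Yb_def by auto
  have Ysum: "(\<Sum>k<n. Yb (k, v)) = 0"
  proof -
    have "(\<Sum>k<n. Yb (k, v)) = ((\<Sum>k<n. if k = ja then 1 else 0) + (\<Sum>k<n. if k = kb then 1 else (0::real))) / 2
         - (\<Sum>k<n. 1 / real n)"
      unfolding Yb_def by (simp add: sum_subtractf sum.distrib sum_divide_distrib[symmetric])
    also have "\<dots> = 0" using jk npos by simp
    finally show ?thesis .
  qed
  have inab: "p \<in> {a, b} \<longleftrightarrow> q \<in> {a, b}" if pq: "{p, q} \<in> M" for p q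
  proof -
    have qp: "{q, p} \<in> M" using pq by (simp add: insert_commute)
    have i1: "q = b" if "p = a"
    proof -
      have "{a, q} \<in> M" using pq that by simp
      then show "q = b" by (rule partner[OF ab])
    qed
    have i2: "q = a" if "p = b"
    proof -
      have "{b, q} \<in> M" using pq that by simp
      then show "q = a" by (rule partner[OF ba])
    qed
    have i3: "p = b" if "q = a"
    proof -
      have "{a, p} \<in> M" using qp that by simp
      then show "p = b" by (rule partner[OF ab])
    qed
    have i4: "p = a" if "q = b"
    proof -
      have "{b, p} \<in> M" using qp that by simp
      then show "p = a" by (rule partner[OF ba])
    qed
    show ?thesis
    proof
      assume "p \<in> {a, b}"
      then have "p = a \<or> p = b" by simp
      then show "q \<in> {a, b}"
      proof
        assume "p = a" then show ?thesis using i1 by simp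
      next
        assume "p = b" then show ?thesis using i2 by simp
      qed
    next
      assume "q \<in> {a, b}"
      then have "q = a \<or> q = b" by simp
      then show "p \<in> {a, b}"
      proof
        assume "q = a" then show ?thesis using i3 by simp
      next
        assume "q = b" then show ?thesis using i4 by simp
      qed
    qed
  qed
  have Ybval: "Yb z = (if z \<in> {a, b} then 1/2 else 0) - 1 / real n" if "z = (k, v)" "k < n" for z k
    using that jk unfolding Yb_def by auto
  have Yconst: "\<forall>p q. {p, q} \<in> M \<longrightarrow> Yb p = Yb q"
  proof (intro allI impI)
    fix p q assume pq: "{p, q} \<in> M"
    obtain j k where jk2: "p = (j, v)" "q = (k, v)" "j < n" "k < n" using Mpair[OF pq] by blast
    have "Yb p = (if p \<in> {a, b} then 1/2 else 0) - 1 / real n" by (rule Ybval[OF jk2(1) jk2(3)])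
    moreover have "Yb q = (if q \<in> {a, b} then 1/2 else 0) - 1 / real n" by (rule Ybval[OF jk2(2) jk2(4)])
    ultimately show "Yb p = Yb q" using inab[OF pq] by simp
  qed
  have decomp: "(if y = a then 1 else 0) = D y / 2 + Yb y + (\<Sum>\<mu>\<in>F. R \<mu> y) / real n" if y: "y \<in> VX" for y
  proof -
    obtain l u where lu: "y = (l, u)" "l < n" using y unfolding blowup_V_def by auto
    have "(\<Sum>\<mu>\<in>F. R \<mu> y) = (if u = v then 1 else 0)" using Rs[OF y] lu unfolding R_def by simp
    then show ?thesis using lu jk npos unfolding D_def Yb_def by (auto simp: field_simps)
  qed
  have "\<forall>x\<in>VX. transition VX EXX (pi / 2) x a = 1 * (if x = b then 1 else 0)"
  proof
    fix x assume x: "x \<in> VX"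
    let ?U = "\<lambda>y. transition VX EXX (pi / 2) x y"
    have "transition VX EXX (pi / 2) x a = (\<Sum>y\<in>VX. ?U y * complex_of_real (if y = a then 1 else 0))"
      by (rule trans_col[OF aVX])
    also have "\<dots> = (\<Sum>y\<in>VX. (?U y * complex_of_real (D y)) / 2 + ?U y * complex_of_real (Yb y)
          + (\<Sum>\<mu>\<in>F. ?U y * complex_of_real (R \<mu> y)) / complex_of_real (real n))"
    proof (intro sum.cong refl)
      fix y assume y: "y \<in> VX"
      show "?U y * complex_of_real (if y = a then 1 else 0) = (?U y * complex_of_real (D y)) / 2 + ?U y * complex_of_real (Yb y)
          + (\<Sum>\<mu>\<in>F. ?U y * complex_of_real (R \<mu> y)) / complex_of_real (real n)"
        unfolding decomp[OF y] of_real_add of_real_divide of_real_sum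
        by (simp add: distrib_left sum_distrib_left)
    qed
    also have "\<dots> = (\<Sum>y\<in>VX. ?U y * complex_of_real (D y)) / 2 + (\<Sum>y\<in>VX. ?U y * complex_of_real (Yb y))
          + (\<Sum>y\<in>VX. \<Sum>\<mu>\<in>F. ?U y * complex_of_real (R \<mu> y)) / complex_of_real (real n)"
      by (simp only: sum.distrib sum_divide_distrib)
    also have "(\<Sum>y\<in>VX. \<Sum>\<mu>\<in>F. ?U y * complex_of_real (R \<mu> y)) = (\<Sum>\<mu>\<in>F. \<Sum>y\<in>VX. ?U y * complex_of_real (R \<mu> y))"
      by (rule sum.swap)
    also have "(\<Sum>y\<in>VX. ?U y * complex_of_real (D y)) = - complex_of_real (D x)"
    proof -
      have "(\<Sum>y\<in>VX. ?U y * complex_of_real (D y))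
          = exp (\<i> * complex_of_real (pi / 2 * (real n * real d + 2))) * complex_of_real (D x)"
        by (rule transition_eig[OF graphX x]) (use eigX_D[OF ab] in \<open>simp add: D_def d_def\<close>)
      then show ?thesis using exp_int2[OF n4] by simp
    qed
    also have "(\<Sum>y\<in>VX. ?U y * complex_of_real (Yb y)) = complex_of_real (Yb x)"
    proof -
      have "(\<Sum>y\<in>VX. ?U y * complex_of_real (Yb y))
          = exp (\<i> * complex_of_real (pi / 2 * (real n * real d))) * complex_of_real (Yb x)"
        by (rule transition_eig[OF graphX x]) (use eigX_Y0[OF Yout Ysum Yconst] in \<open>simp add: d_def\<close>)
      then show ?thesis using exp_int1[OF n4, of "real d"] by simp
    qed
    also have "(\<Sum>\<mu>\<in>F. \<Sum>y\<in>VX. ?U y * complex_of_real (R \<mu> y)) = (\<Sum>\<mu>\<in>F. complex_of_real (R \<mu> x))"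
      unfolding R_def by (intro sum.cong refl) (rule Rt[OF _ x])
    finally have "transition VX EXX (pi / 2) x a
        = complex_of_real (- D x / 2 + Yb x + (\<Sum>\<mu>\<in>F. R \<mu> x) / real n)"
      by (simp add: of_real_sum)
    also have "- D x / 2 + Yb x + (\<Sum>\<mu>\<in>F. R \<mu> x) / real n = (if x = b then 1 else 0)"
    proof -
      obtain l u where lu: "x = (l, u)" "l < n" using x unfolding blowup_V_def by auto
      have "(\<Sum>\<mu>\<in>F. R \<mu> x) = (if u = v then 1 else 0)" using Rs[OF x] lu unfolding R_def by simp
      then show ?thesis using lu jk npos unfolding D_def Yb_def by (auto simp: field_simps)
    qed
    finally show "transition VX EXX (pi / 2) x a = 1 * (if x = b then 1 else 0)" by simp
  qed
  then show ?thesis unfolding lap_pst_def by blast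
qed

lemma periodic:
  assumes n4: "n mod 4 = 0" and supp: "eig_support V E v \<subseteq> \<int>"
    and a: "a \<in> {(j, v) | j. j < n}" and na: "a \<notin> \<Union> M"
  shows "lap_periodic VX EXX a (pi / 2)"
proof -
  obtain F r where F: "finite (F :: real set)"
    and Rt: "\<And>\<mu> x. \<mu> \<in> F \<Longrightarrow> x \<in> VX \<Longrightarrow> (\<Sum>y\<in>VX. transition VX EXX (pi/2) x y * complex_of_real (if fst y < n then r \<mu> (snd y) else 0))
        = complex_of_real (if fst x < n then r \<mu> (snd x) else 0)"
    and Rs: "\<And>y. y \<in> VX \<Longrightarrow> (\<Sum>\<mu>\<in>F. (if fst y < n then r \<mu> (snd y) else 0)) = (if snd y = v then 1 else 0)"
    by (rule R_facts[OF n4 supp]) (rule that)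
  obtain j where j: "a = (j, v)" "j < n" using a by auto
  have aVX: "a \<in> VX" using j vV unfolding blowup_V_def by auto
  have npos: "real n > 0" using j by simp
  define d where "d = Defs.degree V E v"
  define Yc where "Yc = (\<lambda>z. if snd z = v \<and> fst z < n then
      (if fst z = j then 1 else 0) - 1 / real n else (0::real))"
  define R where "R \<mu> = (\<lambda>z. if fst z < n then r \<mu> (snd z) else (0::real))" for \<mu>
  have Yout: "\<forall>z. snd z \<noteq> v \<longrightarrow> Yc z = 0" unfolding Yc_def by auto
  have Ysum: "(\<Sum>k<n. Yc (k, v)) = 0"
  proof -
    have "(\<Sum>k<n. Yc (k, v)) = (\<Sum>k<n. if k = j then 1 else (0::real)) - (\<Sum>k<n. 1 / real n)"
      unfolding Yc_def by (simp add: sum_subtractf)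
    also have "\<dots> = 0" using j npos by simp
    finally show ?thesis .
  qed
  have Yconst: "\<forall>p q. {p, q} \<in> M \<longrightarrow> Yc p = Yc q"
  proof (intro allI impI)
    fix p q assume pq: "{p, q} \<in> M"
    obtain k1 k2 where kk: "p = (k1, v)" "q = (k2, v)" "k1 < n" "k2 < n" using Mpair[OF pq] by auto
    have "p \<noteq> a" "q \<noteq> a" using na pq by auto
    then show "Yc p = Yc q" using kk j unfolding Yc_def by auto
  qed
  have "transition VX EXX (pi / 2) a a = 1"
  proof -
    let ?U = "\<lambda>y. transition VX EXX (pi / 2) a y"
    have decomp: "(if y = a then 1 else 0) = Yc y + (\<Sum>\<mu>\<in>F. R \<mu> y) / real n" if y: "y \<in> VX" for y
    proof -
      obtain l u where lu: "y = (l, u)" "l < n" using y unfolding blowup_V_def by auto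
      have "(\<Sum>\<mu>\<in>F. R \<mu> y) = (if u = v then 1 else 0)" using Rs[OF y] lu unfolding R_def by simp
      then show ?thesis using lu j npos unfolding Yc_def by (auto simp: field_simps)
    qed
    have "transition VX EXX (pi / 2) a a = (\<Sum>y\<in>VX. ?U y * complex_of_real (if y = a then 1 else 0))"
      by (rule trans_col[OF aVX])
    also have "\<dots> = (\<Sum>y\<in>VX. ?U y * complex_of_real (Yc y)
          + (\<Sum>\<mu>\<in>F. ?U y * complex_of_real (R \<mu> y)) / complex_of_real (real n))"
    proof (intro sum.cong refl)
      fix y assume y: "y \<in> VX"
      show "?U y * complex_of_real (if y = a then 1 else 0) = ?U y * complex_of_real (Yc y)
          + (\<Sum>\<mu>\<in>F. ?U y * complex_of_real (R \<mu> y)) / complex_of_real (real n)"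
        unfolding decomp[OF y] of_real_add of_real_divide of_real_sum
        by (simp add: distrib_left sum_distrib_left)
    qed
    also have "\<dots> = (\<Sum>y\<in>VX. ?U y * complex_of_real (Yc y))
          + (\<Sum>y\<in>VX. \<Sum>\<mu>\<in>F. ?U y * complex_of_real (R \<mu> y)) / complex_of_real (real n)"
      by (simp only: sum.distrib sum_divide_distrib)
    also have "(\<Sum>y\<in>VX. \<Sum>\<mu>\<in>F. ?U y * complex_of_real (R \<mu> y)) = (\<Sum>\<mu>\<in>F. \<Sum>y\<in>VX. ?U y * complex_of_real (R \<mu> y))"
      by (rule sum.swap)
    also have "(\<Sum>y\<in>VX. ?U y * complex_of_real (Yc y)) = complex_of_real (Yc a)"
    proof -
      have "(\<Sum>y\<in>VX. ?U y * complex_of_real (Yc y))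
          = exp (\<i> * complex_of_real (pi / 2 * (real n * real d))) * complex_of_real (Yc a)"
        by (rule transition_eig[OF graphX aVX]) (use eigX_Y0[OF Yout Ysum Yconst] in \<open>simp add: d_def\<close>)
      then show ?thesis using exp_int1[OF n4, of "real d"] by simp
    qed
    also have "(\<Sum>\<mu>\<in>F. \<Sum>y\<in>VX. ?U y * complex_of_real (R \<mu> y)) = (\<Sum>\<mu>\<in>F. complex_of_real (R \<mu> a))"
      unfolding R_def by (intro sum.cong refl) (rule Rt[OF _ aVX])
    finally have "transition VX EXX (pi / 2) a a = complex_of_real (Yc a + (\<Sum>\<mu>\<in>F. R \<mu> a) / real n)"
      by (simp add: of_real_sum)
    also have "Yc a + (\<Sum>\<mu>\<in>F. R \<mu> a) / real n = 1" using decomp[OF aVX] by simp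
    finally show ?thesis by simp
  qed
  then show ?thesis unfolding lap_periodic_def by simp
qed

end


theorem theorem10:
  fixes V :: "'a set" and E :: "'a \<Rightarrow> 'a \<Rightarrow> bool" and n :: nat and v :: 'a
    and M :: "(nat \<times> 'a) set set"
  assumes G: "graph V E"
    and n4: "n mod 4 = 0"
    and vV: "v \<in> V"
    and supp: "eig_support V E v \<subseteq> \<int>"
    and M_edges: "\<forall>e\<in>M. \<exists>j k. j < n \<and> k < n \<and> j \<noteq> k \<and> e = {(j, v), (k, v)}"
    and M_matching: "\<forall>e\<in>M. \<forall>f\<in>M. e \<noteq> f \<longrightarrow> e \<inter> f = {}"
  defines "VX \<equiv> blowup_V n V"
    and "EXg \<equiv> (\<lambda>x y. blowup_E n E x y \<or> {x, y} \<in> M)"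
    and "Tv \<equiv> {(j, v) | j. j < n}"
  shows "(\<forall>a b. {a, b} \<in> M \<longrightarrow> lap_pst VX EXg a b (pi / 2))
       \<and> (\<forall>a\<in>Tv. a \<notin> \<Union>M \<longrightarrow> lap_periodic VX EXg a (pi / 2))"
proof -
  interpret bsetup V E n v M using G vV M_edges M_matching by unfold_locales
  show ?thesis
    unfolding VX_def EXg_def Tv_def
    apply (intro conjI allI impI ballI)
    subgoal for a b by (rule pst[OF n4 supp])
    subgoal for a by (rule periodic[OF n4 supp])
    done
qed

end
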